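(* Let $m_{\bm{\lambda}}$ be the multiplicity of $S_{\bm{\lambda}}$ in the isotypic decomposition of the $\mathfrak{S}_n$-module $V=\mathbb{R}[\mathcal{V}_n]_{\le d}$. Then the number of partitions $\bm{\lambda}\vdash n$ with $m_{\bm{\lambda}}\ne0$ is at most $p(0)+p(1)+\cdots+p(2d)$, where $p(i)$ is the number of partitions of $i$. In particular, the size of $\Lambda=\{\bm{\lambda}\vdash n:\bm{\lambda}\geq_{\textup{lex}}(n-2d,1^{2d})\}$ is bounded by a quantity independent of $n$.
   Context: $\mathbb{R}[\mathsf{x}]$ is the polynomial ring in variables $\mathsf{x}_{ij}$, $1\le i<j\le n$; $\mathcal{V}_n=\{0,1\}^{\binom n2}$; $\mathbb{R}[\mathcal{V}_n]=\mathbb{R}[\mathsf{x}]/\mathcal{I}_n$ where $\mathcal{I}_n$ is generated by all $\mathsf{x}_{ij}^2-\mathsf{x}_{ij}$ (functions on $\mathcal{V}_n$, identified with square-free polynomials); $\mathbb{R}[\mathcal{V}_n]_{\le d}$ consists of the square-free polynomials of degree at most $d$. $\mathfrak{S}_n$ acts via $\mathfrak{s}\cdot\mathsf{x}_{ij}=\mathsf{x}_{\mathfrak{s}(i)\mathfrak{s}(j)}$ (with $\mathsf{x}_{ji}:=\mathsf{x}_{ij}$) extended to ring automorphisms. $S_{\bm{\lambda}}$ denotes the irreducible $\mathfrak{S}_n$-module indexed by $\bm{\lambda}\vdash n$. $\geq_{\textup{lex}}$ is lexicographic order on partitions and $(n-2d,1^{2d})$ is the hook partition with first part $n-2d$ followed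 by $2d$ ones. *)

theory Defs
  imports "HOL-Combinatorics.Combinatorics"
begin

definition partition_of :: "nat \<Rightarrow> nat list \<Rightarrow> bool" where
  "partition_of n lam \<longleftrightarrow> sorted_wrt (\<ge>) lam \<and> 0 \<notin> set lam \<and> sum_list lam = n"

definition num_partitions :: "nat \<Rightarrow> nat" where
  "num_partitions i = card {lam. partition_of i lam}"

definition lex_ge :: "nat list \<Rightarrow> nat list \<Rightarrow> bool" where
  "lex_ge lam mu \<longleftrightarrow> lam = mu \<or> (mu, lam) \<in> lexord {(a, b). a < b}"

definition hook :: "nat \<Rightarrow> nat \<Rightarrow> nat list" where
  "hook n d = (n - 2 * d) # replicate (2 * d) 1"

definition cells :: "nat list \<Rightarrow> (nat \<times> nat) set" where
  "cells lam = {(i, j). i < length lam \<and> j < lam ! i}"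

definition tableau :: "nat \<Rightarrow> nat list \<Rightarrow> (nat \<times> nat \<Rightarrow> nat) \<Rightarrow> bool" where
  "tableau n lam T \<longleftrightarrow> bij_betw T (cells lam) {0..<n}"

text \<open>The tabloid {T}, encoded by the function sending each entry k < n to its row
  (two tableaux give the same tabloid iff their rows have the same contents).\<close>
definition tabloid :: "nat \<Rightarrow> nat list \<Rightarrow> (nat \<times> nat \<Rightarrow> nat) \<Rightarrow> (nat \<Rightarrow> nat)" where
  "tabloid n lam T = (\<lambda>k. if k < n then fst (the_inv_into (cells lam) T k) else 0)"

definition column_group :: "nat \<Rightarrow> nat list \<Rightarrow> (nat \<times> nat \<Rightarrow> nat) \<Rightarrow> (nat \<Rightarrow> nat) set" where
  "column_group n lam T = {\<pi>. \<pi> permutes {0..<n} \<and>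
      (\<forall>c \<in> cells lam. snd (the_inv_into (cells lam) T (\<pi> (T c))) = snd c)}"

definition polytabloid :: "nat \<Rightarrow> nat list \<Rightarrow> (nat \<times> nat \<Rightarrow> nat) \<Rightarrow> ((nat \<Rightarrow> nat) \<Rightarrow> real)" where
  "polytabloid n lam T = (\<lambda>t. \<Sum>\<pi> \<in> column_group n lam T.
      of_int (sign \<pi>) * (if t = tabloid n lam (\<pi> \<circ> T) then 1 else 0))"

definition specht :: "nat \<Rightarrow> nat list \<Rightarrow> ((nat \<Rightarrow> nat) \<Rightarrow> real) set" where
  "specht n lam = {f. \<exists>F c. finite F \<and> F \<subseteq> {polytabloid n lam T | T. tableau n lam T} \<and>
      f = (\<lambda>t. \<Sum>g\<in>F. c g * g t)}"

text \<open>Action of sigma on functions on tabloids: (sigma . f)(t) = f(t o sigma),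
  so that sigma . {T} = {sigma o T}.\<close>
definition act_tab :: "(nat \<Rightarrow> nat) \<Rightarrow> ((nat \<Rightarrow> nat) \<Rightarrow> real) \<Rightarrow> ((nat \<Rightarrow> nat) \<Rightarrow> real)" where
  "act_tab \<sigma> f = (\<lambda>t. f (t \<circ> \<sigma>))"

text \<open>Edges {i,j}, i<j<n; the variable x_ij is indexed by the edge {i,j}.\<close>
definition edges :: "nat \<Rightarrow> nat set set" where
  "edges n = {{i, j} | i j. i < j \<and> j < n}"

text \<open>A square-free polynomial is given by its coefficient function on square-free monomials
  prod_{e in E} x_e (E a set of edges). R[V_n]_{<=d}: square-free polynomials of degree <= d.\<close>
definition Vd :: "nat \<Rightarrow> nat \<Rightarrow> (nat set set \<Rightarrow> real) set" where
  "Vd n d = {c. \<forall>E. c E \<noteq> 0 \<longrightarrow> E \<subseteq> edges n \<and> card E \<le> d}"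

text \<open>sigma . x_ij = x_{sigma i, sigma j}: the monomial x^E is sent to x^{sigma(E)}.\<close>
definition act_poly :: "(nat \<Rightarrow> nat) \<Rightarrow> (nat set set \<Rightarrow> real) \<Rightarrow> (nat set set \<Rightarrow> real)" where
  "act_poly \<sigma> c = (\<lambda>E. c ((\<lambda>e. inv \<sigma> ` e) ` E))"

definition equiv_hom :: "nat \<Rightarrow> nat \<Rightarrow> nat list \<Rightarrow>
    (((nat \<Rightarrow> nat) \<Rightarrow> real) \<Rightarrow> (nat set set \<Rightarrow> real)) \<Rightarrow> bool" where
  "equiv_hom n d lam \<phi> \<longleftrightarrow>
     (\<forall>f \<in> specht n lam. \<phi> f \<in> Vd n d) \<and>
     (\<forall>f \<in> specht n lam. \<forall>g \<in> specht n lam. \<phi> (\<lambda>t. f t + g t) = (\<lambda>E. \<phi> f E + \<phi> g E)) \<and>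
     (\<forall>f \<in> specht n lam. \<forall>a::real. \<phi> (\<lambda>t. a * f t) = (\<lambda>E. a * \<phi> f E)) \<and>
     (\<forall>\<sigma>. \<sigma> permutes {0..<n} \<longrightarrow>
        (\<forall>f \<in> specht n lam. \<phi> (act_tab \<sigma> f) = act_poly \<sigma> (\<phi> f)))"

definition lin_indep_on :: "((nat \<Rightarrow> nat) \<Rightarrow> real) set \<Rightarrow>
    (((nat \<Rightarrow> nat) \<Rightarrow> real) \<Rightarrow> (nat set set \<Rightarrow> real)) set \<Rightarrow> bool" where
  "lin_indep_on S F \<longleftrightarrow> (\<forall>c. (\<forall>f \<in> S. \<forall>E. (\<Sum>\<phi>\<in>F. c \<phi> * \<phi> f E) = 0) \<longrightarrow> (\<forall>\<phi>\<in>F. c \<phi> = 0))"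

text \<open>m_lam = dim Hom_{S_n}(S_lam, V), the multiplicity of S_lam in V
  (S_lam is absolutely irreducible, so End(S_lam) = R).\<close>
definition specht_mult :: "nat \<Rightarrow> nat \<Rightarrow> nat list \<Rightarrow> nat" where
  "specht_mult n d lam = (GREATEST k. \<exists>F. finite F \<and> card F = k \<and>
      (\<forall>\<phi>\<in>F. equiv_hom n d lam \<phi>) \<and> lin_indep_on (specht n lam) F)"

end

theory Submission
  imports Defs
begin

lemma tabloid_comp:
  assumes T: "tableau n lam T" and s: "\<sigma> permutes {0..<n}"
  shows "tabloid n lam (\<sigma> \<circ> T) = (\<lambda>k. tabloid n lam T (inv \<sigma> k))"
proof
  fix k
  show "tabloid n lam (\<sigma> \<circ> T) k = tabloid n lam T (inv \<sigma> k)"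
  proof (cases "k < n")
    case True
    have bT: "bij_betw T (cells lam) {0..<n}" using T unfolding tableau_def .
    have ik: "inv \<sigma> k \<in> {0..<n}"
      using True s by (metis atLeastLessThan_iff permutes_inv permutes_in_image zero_le)
    define c where "c = the_inv_into (cells lam) T (inv \<sigma> k)"
    have c: "c \<in> cells lam" "T c = inv \<sigma> k"
      using bT ik unfolding c_def
      by (auto simp: bij_betw_def the_inv_into_into f_the_inv_into_f)
    have "(\<sigma> \<circ> T) c = k" using c s by (simp add: permutes_inverses(1))
    moreover have "inj_on (\<sigma> \<circ> T) (cells lam)"
      using bT s by (metis bij_betw_def comp_inj_on permutes_inj inj_on_subset subset_UNIV)
    ultimately have "the_inv_into (cells lam) (\<sigma> \<circ> T) k = c"
      using c(1) by (metis the_inv_into_f_eq)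
    then show ?thesis using True ik unfolding tabloid_def c_def by simp
  next
    case False
    then have "inv \<sigma> k = k" using s
      by (metis atLeastLessThan_iff permutes_inv permutes_not_in)
    then show ?thesis using False unfolding tabloid_def by simp
  qed
qed

lemma tableau_comp:
  assumes T: "tableau n lam T" and s: "\<sigma> permutes {0..<n}"
  shows "tableau n lam (\<sigma> \<circ> T)"
  using T s unfolding tableau_def by (meson bij_betw_trans permutes_imp_bij)

lemma swap_polytabloid:
  assumes T: "tableau n lam T" and uv: "u \<noteq> v" "u < n" "v < n"
    and col: "snd (the_inv_into (cells lam) T u) = snd (the_inv_into (cells lam) T v)"
  shows "act_tab (transpose u v) (polytabloid n lam T) = (\<lambda>t. -1 * polytabloid n lam T t)"
proof
  fix t
  let ?tau = "transpose u v"
  let ?C = "column_group n lam T"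
  let ?col = "\<lambda>k. snd (the_inv_into (cells lam) T k)"
  have tp: "?tau permutes {0..<n}" using uv by (simp add: permutes_swap_id)
  have colt: "?col (?tau k) = ?col k" for k
    using col by (cases "k = u"; cases "k = v") auto
  have memC: "?tau \<circ> p \<in> ?C" if "p \<in> ?C" for p
    using that tp colt unfolding column_group_def by (auto intro: permutes_compose)
  have ttid: "?tau \<circ> (?tau \<circ> p) = p" for p :: "nat \<Rightarrow> nat"
    by (simp add: comp_assoc[symmetric])
  have eq1: "(t \<circ> ?tau = tabloid n lam (p \<circ> T)) \<longleftrightarrow> (t = tabloid n lam (?tau \<circ> p \<circ> T))"
    if "p \<in> ?C" for p
  proof -
    have pp: "p permutes {0..<n}" using that unfolding column_group_def by simp
    have "tabloid n lam (?tau \<circ> p \<circ> T) = tabloid n lam (?tau \<circ> (p \<circ> T))"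
      by (simp add: comp_assoc)
    also have "\<dots> = (\<lambda>k. tabloid n lam (p \<circ> T) (?tau k))"
      using tabloid_comp[OF tableau_comp[OF T pp] tp] by simp
    finally have e: "tabloid n lam (?tau \<circ> p \<circ> T) = tabloid n lam (p \<circ> T) \<circ> ?tau"
      by (simp add: o_def)
    show ?thesis
    proof
      assume "t \<circ> ?tau = tabloid n lam (p \<circ> T)"
      then have "t \<circ> ?tau \<circ> ?tau = tabloid n lam (p \<circ> T) \<circ> ?tau" by simp
      then show "t = tabloid n lam (?tau \<circ> p \<circ> T)" using e by (simp add: comp_assoc)
    next
      assume "t = tabloid n lam (?tau \<circ> p \<circ> T)"
      then have "t \<circ> ?tau = tabloid n lam (p \<circ> T) \<circ> ?tau \<circ> ?tau" using e by simp
      then show "t \<circ> ?tau = tabloid n lam (p \<circ> T)" by (simp add: comp_assoc)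
    qed
  qed
  have "act_tab ?tau (polytabloid n lam T) t =
     (\<Sum>p\<in>?C. of_int (sign p) * (if t = tabloid n lam (?tau \<circ> p \<circ> T) then 1 else 0))"
    unfolding act_tab_def polytabloid_def using eq1 by (intro sum.cong) auto
  also have "\<dots> = (\<Sum>q\<in>?C. of_int (sign (?tau \<circ> q)) * (if t = tabloid n lam (q \<circ> T) then 1 else 0))"
    apply (rule sum.reindex_bij_witness[where i = "\<lambda>q. ?tau \<circ> q" and j = "\<lambda>q. ?tau \<circ> q"])
    using memC ttid by (auto simp: comp_assoc)
  also have "\<dots> = (\<Sum>q\<in>?C. - (of_int (sign q) * (if t = tabloid n lam (q \<circ> T) then 1 else 0)))"
  proof (intro sum.cong refl)
    fix q assume "q \<in> ?C"
    then have "permutation q" unfolding column_group_def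
      by (auto intro: permutes_imp_permutation)
    then have "sign (?tau \<circ> q) = - sign q"
      using uv by (simp add: sign_compose permutation_swap_id sign_swap_id)
    then show "of_int (sign (?tau \<circ> q)) * (if t = tabloid n lam (q \<circ> T) then 1 else 0) =
      - (of_int (sign q) * (if t = tabloid n lam (q \<circ> T) then 1 else (0::real)))" by simp
  qed
  also have "\<dots> = -1 * polytabloid n lam T t"
    unfolding polytabloid_def by (simp add: sum_negf)
  finally show "act_tab ?tau (polytabloid n lam T) t = -1 * polytabloid n lam T t" .
qed


lemma card_union_edges:
  assumes "E \<subseteq> edges n"
  shows "finite (\<Union>E)" "\<Union>E \<subseteq> {0..<n}" "card (\<Union>E) \<le> 2 * card E"
proof -
  have sub: "\<Union>E \<subseteq> {0..<n}" using assms unfolding edges_def by auto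
  show "finite (\<Union>E)" "\<Union>E \<subseteq> {0..<n}" using sub finite_subset by auto
  have fE: "finite E" using sub by (metis Pow_iff finite_Pow_iff finite_atLeastLessThan finite_subset subset_Pow_Union)
  have "card (\<Union>E) \<le> (\<Sum>e\<in>E. card e)" by (rule card_Union_le_sum_card)
  also have "\<dots> \<le> (\<Sum>e\<in>E. 2)"
  proof (rule sum_mono)
    fix e assume "e \<in> E"
    then obtain i j where "e = {i, j}" using assms unfolding edges_def by auto
    then show "card e \<le> 2" by (simp add: card_insert_le_m1)
  qed
  finally show "card (\<Union>E) \<le> 2 * card E" by simp
qed

lemma poly_vanish:
  assumes P: "partition_of n lam" and small: "hd lam + 2 * d < n"
    and phi: "equiv_hom n d lam \<phi>" and T: "tableau n lam T"
  shows "\<phi> (polytabloid n lam T) E = 0"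
proof -
  let ?e = "polytabloid n lam T"
  let ?col = "\<lambda>k. snd (the_inv_into (cells lam) T k)"
  have eS: "?e \<in> specht n lam"
    unfolding specht_def using T
    by (intro CollectI exI[of _ "{?e}"] exI[of _ "\<lambda>_. 1"]) auto
  have "\<phi> ?e \<in> Vd n d" using phi eS unfolding equiv_hom_def by blast
  show ?thesis
  proof (cases "E \<subseteq> edges n \<and> card E \<le> d")
    case False
    then show ?thesis using \<open>\<phi> ?e \<in> Vd n d\<close> unfolding Vd_def by blast
  next
    case True
    define U where "U = {0..<n} - \<Union>E"
    note ue = card_union_edges[of E n]
    have "card U \<ge> n - card (\<Union>E)"
      unfolding U_def using diff_card_le_card_Diff[of "\<Union>E" "{0..<n}"] ue True by simp
    then have cU: "card U > hd lam" using ue True small by linarith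
    have lne: "lam \<noteq> []" using P small unfolding partition_of_def by auto
    have bT: "bij_betw T (cells lam) {0..<n}" using T unfolding tableau_def .
    have colr: "?col k \<in> {..<hd lam}" if "k \<in> U" for k
    proof -
      have "k \<in> {0..<n}" using that U_def by auto
      then have "the_inv_into (cells lam) T k \<in> cells lam"
        using bT by (auto simp: bij_betw_def the_inv_into_into)
      then obtain i j where ij: "the_inv_into (cells lam) T k = (i, j)" "i < length lam" "j < lam ! i"
        unfolding cells_def by auto
      have "lam ! i \<le> lam ! 0"
        using P ij(2) unfolding partition_of_def
        by (cases i) (auto simp: sorted_wrt_iff_nth_less)
      then show ?thesis using ij lne by (simp add: hd_conv_nth)
    qed
    have "\<not> inj_on ?col U"
    proof
      assume "inj_on ?col U"
      then have "card U \<le> card {..<hd lam}"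
        using colr by (intro card_inj_on_le) auto
      then show False using cU by simp
    qed
    then obtain u v where uv: "u \<in> U" "v \<in> U" "u \<noteq> v" "?col u = ?col v"
      unfolding inj_on_def by blast
    let ?tau = "transpose u v"
    have uvn: "u < n" "v < n" using uv U_def by auto
    have tp: "?tau permutes {0..<n}" using uvn by (simp add: permutes_swap_id)
    have sw: "act_tab ?tau ?e = (\<lambda>t. -1 * ?e t)"
      using swap_polytabloid[OF T uv(3) uvn uv(4)] .
    have "\<phi> (act_tab ?tau ?e) = act_poly ?tau (\<phi> ?e)"
      using phi tp eS unfolding equiv_hom_def by blast
    moreover have "\<phi> (\<lambda>t. -1 * ?e t) = (\<lambda>E. -1 * \<phi> ?e E)"
      using phi eS unfolding equiv_hom_def by blast
    ultimately have eq: "-1 * \<phi> ?e E = act_poly ?tau (\<phi> ?e) E" using sw by metis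
    have fix1: "?tau x = x" if "x \<in> \<Union>E" for x
    proof -
      have "x \<noteq> u" "x \<noteq> v" using that uv(1,2) unfolding U_def by auto
      then show ?thesis by simp
    qed
    have "(\<lambda>e. inv ?tau ` e) ` E = E"
    proof -
      have "inv ?tau ` e = e" if "e \<in> E" for e
      proof -
        have "\<forall>x\<in>e. ?tau x = x" using fix1 that by blast
        then have "?tau ` e = e" by (simp add: image_cong)
        then show ?thesis by (simp add: inv_transpose_eq)
      qed
      then show ?thesis by simp
    qed
    then have "act_poly ?tau (\<phi> ?e) E = \<phi> ?e E" unfolding act_poly_def by simp
    then show ?thesis using eq by simp
  qed
qed


lemma eh_add:
  assumes "equiv_hom n d lam \<phi>" "f \<in> specht n lam" "g \<in> specht n lam"
  shows "\<phi> (\<lambda>t. f t + g t) = (\<lambda>E. \<phi> f E + \<phi> g E)"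
  using assms unfolding equiv_hom_def by blast

lemma eh_scale:
  assumes "equiv_hom n d lam \<phi>" "f \<in> specht n lam"
  shows "\<phi> (\<lambda>t. a * f t) = (\<lambda>E. a * \<phi> f E)"
  using assms unfolding equiv_hom_def by blast

lemma specht_vanish:
  assumes P: "partition_of n lam" and small: "hd lam + 2 * d < n"
    and phi: "equiv_hom n d lam \<phi>" and f: "f \<in> specht n lam"
  shows "\<phi> f E = 0"
proof -
  obtain F c where F: "finite F" "F \<subseteq> {polytabloid n lam T | T. tableau n lam T}"
    and fe: "f = (\<lambda>t. \<Sum>g\<in>F. c g * g t)" using f unfolding specht_def by blast
  have gS: "g \<in> specht n lam" if "g \<in> {polytabloid n lam T | T. tableau n lam T}" for g
    unfolding specht_def using that
    by (intro CollectI exI[of _ "{g}"] exI[of _ "\<lambda>_. 1"]) auto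
  have g0: "\<phi> g E = 0" if "g \<in> {polytabloid n lam T | T. tableau n lam T}" for g E
    using that poly_vanish[OF P small phi] by blast
  have "(\<lambda>t. \<Sum>g\<in>G. c g * g t) \<in> specht n lam \<and> (\<forall>E. \<phi> (\<lambda>t. \<Sum>g\<in>G. c g * g t) E = 0)"
    if "G \<subseteq> F" for G
    using finite_subset[OF that F(1)] that
  proof (induction G rule: finite_subset_induct')
    case empty
    have z: "(\<lambda>t. 0::real) \<in> specht n lam" unfolding specht_def
      by (intro CollectI exI[of _ "{}"]) auto
    have scl: "\<forall>f\<in>specht n lam. \<forall>a. \<phi> (\<lambda>t. a * f t) = (\<lambda>E. a * \<phi> f E)"
      using phi unfolding equiv_hom_def by blast
    have "\<forall>a. \<phi> (\<lambda>t. a * (\<lambda>t. 0::real) t) = (\<lambda>E. a * \<phi> (\<lambda>t. 0) E)"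
      using bspec[OF scl z] .
    then have "\<phi> (\<lambda>t. 0 * (\<lambda>t. 0::real) t) = (\<lambda>E. 0 * \<phi> (\<lambda>t. 0) E)" by (rule spec)
    then show ?case using z by simp
  next
    case (insert a G)
    have aP: "a \<in> {polytabloid n lam T | T. tableau n lam T}" using insert F(2) by blast
    let ?h = "\<lambda>t. \<Sum>g\<in>G. c g * g t"
    have s1: "(\<lambda>t. c a * a t) \<in> specht n lam" unfolding specht_def using aP
      by (intro CollectI exI[of _ "{a}"] exI[of _ c]) auto
    have sc: "\<phi> (\<lambda>t. c a * a t) = (\<lambda>E. c a * \<phi> a E)"
      using phi gS[OF aP] unfolding equiv_hom_def by blast
    have ad: "\<phi> (\<lambda>t. c a * a t + ?h t) = (\<lambda>E. \<phi> (\<lambda>t. c a * a t) E + \<phi> ?h E)"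
      using eh_add[OF phi s1 conjunct1[OF insert.IH]] by simp
    have eqf: "(\<lambda>t. \<Sum>g\<in>insert a G. c g * g t) = (\<lambda>t. c a * a t + ?h t)"
      using insert by simp
    have mem: "(\<lambda>t. \<Sum>g\<in>insert a G. c g * g t) \<in> specht n lam"
      unfolding specht_def using insert F(2)
      by (intro CollectI exI[of _ "insert a G"] exI[of _ c]) (auto dest: finite_subset)
    show ?case using mem eqf ad sc insert.IH g0[OF aP] by simp
  qed
  then show ?thesis using fe by blast
qed

lemma mult_zero:
  assumes P: "partition_of n lam" and small: "hd lam + 2 * d < n"
  shows "specht_mult n d lam = 0"
proof -
  have empty: "F = {}" if "\<forall>\<phi>\<in>F. equiv_hom n d lam \<phi>" "lin_indep_on (specht n lam) F" for F
  proof (rule ccontr)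
    assume "F \<noteq> {}"
    then obtain \<phi> where "\<phi> \<in> F" by blast
    have "\<forall>f \<in> specht n lam. \<forall>E. (\<Sum>\<psi>\<in>F. (\<lambda>_. 1::real) \<psi> * \<psi> f E) = 0"
      using that(1) specht_vanish[OF P small] by (auto intro!: sum.neutral)
    then show False using that(2) \<open>\<phi> \<in> F\<close> unfolding lin_indep_on_def by fastforce
  qed
  show ?thesis unfolding specht_mult_def
  proof (rule Greatest_equality)
    show "\<exists>F. finite F \<and> card F = 0 \<and> (\<forall>\<phi>\<in>F. equiv_hom n d lam \<phi>) \<and> lin_indep_on (specht n lam) F"
      by (intro exI[of _ "{}"]) (simp add: lin_indep_on_def)
  next
    fix k assume "\<exists>F. finite F \<and> card F = k \<and> (\<forall>\<phi>\<in>F. equiv_hom n d lam \<phi>) \<and> lin_indep_on (specht n lam) F"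
    then show "k \<le> 0" using empty by fastforce
  qed
qed


lemma length_le_sum: "0 \<notin> set xs \<Longrightarrow> length xs \<le> sum_list (xs::nat list)"
  by (induction xs) (auto simp: Suc_le_eq)

lemma finite_partitions: "finite {lam. partition_of i lam}"
proof (rule finite_subset)
  show "{lam. partition_of i lam} \<subseteq> {xs. set xs \<subseteq> {0..i} \<and> length xs \<le> i}"
    unfolding partition_of_def using length_le_sum member_le_sum_list
    by fastforce
  show "finite {xs. set xs \<subseteq> {0..i} \<and> length xs \<le> i}"
    by (rule finite_lists_length_le) simp
qed

definition Hs :: "nat \<Rightarrow> nat \<Rightarrow> nat list set" where
  "Hs n d = {lam. partition_of n lam \<and> (lam = [] \<or> n \<le> hd lam + 2 * d)}"

lemma card_Hs: "card (Hs n d) \<le> (\<Sum>i\<le>2 * d. num_partitions i)"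
proof -
  have inj: "inj_on tl (Hs n d)"
  proof
    fix a b assume a: "a \<in> Hs n d" and b: "b \<in> Hs n d" and t: "tl a = tl b"
    have pa: "partition_of n a" and pb: "partition_of n b" using a b unfolding Hs_def by auto
    show "a = b"
    proof (cases a)
      case Nil
      then have "n = 0" using pa unfolding partition_of_def by simp
      then have "b = []" using pb unfolding partition_of_def
        by (cases b) auto
      then show ?thesis using Nil by simp
    next
      case (Cons x xs)
      then have "n > 0" using pa unfolding partition_of_def by auto
      then obtain y ys where bb: "b = y # ys" using pb unfolding partition_of_def
        by (cases b) auto
      then have "ys = xs" using t Cons by simp
      then show ?thesis using pa pb Cons bb unfolding partition_of_def by simp
    qed
  qed
  have sub: "tl ` Hs n d \<subseteq> (\<Union>i\<in>{..2*d}. {lam. partition_of i lam})"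
  proof
    fix l assume "l \<in> tl ` Hs n d"
    then obtain a where a: "a \<in> Hs n d" "l = tl a" by blast
    have pa: "partition_of n a" using a unfolding Hs_def by auto
    have "partition_of (sum_list l) l"
    proof (cases a)
      case Nil then show ?thesis using a by (simp add: partition_of_def)
    next
      case (Cons x xs) then show ?thesis using a pa by (simp add: partition_of_def)
    qed
    moreover have "sum_list l \<le> 2 * d"
    proof (cases a)
      case Nil then show ?thesis using a by simp
    next
      case (Cons x xs) then show ?thesis using a pa unfolding Hs_def partition_of_def by auto
    qed
    ultimately show "l \<in> (\<Union>i\<in>{..2*d}. {lam. partition_of i lam})" by auto
  qed
  have fin: "finite (\<Union>i\<in>{..2*d}. {lam. partition_of i lam})"
    using finite_partitions by auto
  have "card (Hs n d) \<le> card (\<Union>i\<in>{..2*d}. {lam. partition_of i lam})"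
    using card_inj_on_le[OF inj sub fin] .
  also have "\<dots> \<le> (\<Sum>i\<le>2 * d. card {lam. partition_of i lam})"
    by (rule card_UN_le) simp
  finally show ?thesis unfolding num_partitions_def .
qed

lemma finite_Hs: "finite (Hs n d)"
  using finite_partitions[of n] unfolding Hs_def by (auto intro: finite_subset)

theorem proposition2p7:
  fixes d :: nat
  shows "(\<forall>n::nat. card {lam. partition_of n lam \<and> specht_mult n d lam \<noteq> 0}
            \<le> (\<Sum>i\<le>2 * d. num_partitions i))
       \<and> (\<exists>B::nat. \<forall>n::nat. card {lam. partition_of n lam \<and> lex_ge lam (hook n d)} \<le> B)"
proof
  show "\<forall>n::nat. card {lam. partition_of n lam \<and> specht_mult n d lam \<noteq> 0}
            \<le> (\<Sum>i\<le>2 * d. num_partitions i)"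
  proof
    fix n
    have "{lam. partition_of n lam \<and> specht_mult n d lam \<noteq> 0} \<subseteq> Hs n d"
      unfolding Hs_def using mult_zero by fastforce
    then show "card {lam. partition_of n lam \<and> specht_mult n d lam \<noteq> 0}
            \<le> (\<Sum>i\<le>2 * d. num_partitions i)"
      using card_mono[OF finite_Hs] card_Hs order_trans by blast
  qed
next
  show "\<exists>B::nat. \<forall>n::nat. card {lam. partition_of n lam \<and> lex_ge lam (hook n d)} \<le> B"
  proof (intro exI allI)
    fix n
    have "lam \<in> Hs n d" if "partition_of n lam" "lex_ge lam (hook n d)" for lam
    proof -
      have "n - 2 * d \<le> hd lam \<and> lam \<noteq> []"
      proof (cases "lam = hook n d")
        case True then show ?thesis by (simp add: hook_def)
      next
        case False
        then have "(hook n d, lam) \<in> lexord {(a, b). a < b}"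
          using that(2) unfolding lex_ge_def by simp
        then show ?thesis unfolding lexord_def hook_def
          by (auto simp: Cons_eq_append_conv append_eq_Cons_conv)
      qed
      then show ?thesis using that(1) unfolding Hs_def by auto
    qed
    then have "{lam. partition_of n lam \<and> lex_ge lam (hook n d)} \<subseteq> Hs n d" by blast
    then show "card {lam. partition_of n lam \<and> lex_ge lam (hook n d)}
            \<le> (\<Sum>i\<le>2 * d. num_partitions i)"
      using card_mono[OF finite_Hs] card_Hs order_trans by blast
  qed
qed

end
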